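(* In the general public project problem (any $n\ge2$, any $c>0$, any cost shares $c_i>0$ with $\sum_i c_i=c$), there is no pay-only Groves mechanism that dominates the VCG mechanism.
   Context: General public project problem: $n\ge2$ players, decisions $D=\{0,1\}$, $\Theta_i=[0,c]$ with $c>0$, $v_i(d,\theta_i)=d(\theta_i-c_i)$ where $c_i>0$ and $\sum_ic_i=c$; efficient decision $f(\theta)=1$ iff $\sum_i\theta_i\ge c$. A Groves mechanism has taxes $t_i(\theta)=\sum_{j\ne i}v_j(f(\theta),\theta_j)+h_i(\theta_{-i})$ for arbitrary $h_i$; player $i$'s utility is $v_i(f(\theta),\theta_i)+t_i(\theta)$. The VCG (Clarke) mechanism uses $h_i(\theta_{-i})=-\max_{d\in D}\sum_{j\ne i}v_j(d,\theta_j)$. Pay-only: $t_i(\theta)\le0$ for all $\theta,i$. $t'$ dominates $t$ if $t_i(\theta)\le t'_i(\theta)$ for all $\theta,i$, strictly for some $\theta,i$. *)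

theory Defs
  imports Main "HOL-Analysis.Analysis"
begin

text \<open>Players are 0,...,n-1. A type profile is theta :: nat => real; only the
entries i < n matter. Decisions D = {0,1} are represented as reals 0 and 1.\<close>

definition profiles :: "nat \<Rightarrow> real \<Rightarrow> (nat \<Rightarrow> real) set" where
  "profiles n c = {\<theta>. \<forall>i<n. \<theta> i \<in> {0..c}}"

definition valuation :: "(nat \<Rightarrow> real) \<Rightarrow> nat \<Rightarrow> real \<Rightarrow> real \<Rightarrow> real" where
  "valuation cs i d \<theta>i = d * (\<theta>i - cs i)"

definition decision :: "nat \<Rightarrow> real \<Rightarrow> (nat \<Rightarrow> real) \<Rightarrow> real" where
  "decision n c \<theta> = (if (\<Sum>i<n. \<theta> i) \<ge> c then 1 else 0)"

definition depends_only_on_others ::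
  "nat \<Rightarrow> real \<Rightarrow> (nat \<Rightarrow> (nat \<Rightarrow> real) \<Rightarrow> real) \<Rightarrow> bool" where
  "depends_only_on_others n c h \<longleftrightarrow>
     (\<forall>i<n. \<forall>\<theta>\<in>profiles n c. \<forall>\<theta>'\<in>profiles n c.
        (\<forall>j<n. j \<noteq> i \<longrightarrow> \<theta> j = \<theta>' j) \<longrightarrow> h i \<theta> = h i \<theta>')"

definition groves_tax ::
  "nat \<Rightarrow> real \<Rightarrow> (nat \<Rightarrow> real) \<Rightarrow> (nat \<Rightarrow> (nat \<Rightarrow> real) \<Rightarrow> real)
     \<Rightarrow> nat \<Rightarrow> (nat \<Rightarrow> real) \<Rightarrow> real" where
  "groves_tax n c cs h i \<theta> =
     (\<Sum>j\<in>{..<n} - {i}. valuation cs j (decision n c \<theta>) (\<theta> j)) + h i \<theta>"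

definition vcg_h :: "nat \<Rightarrow> (nat \<Rightarrow> real) \<Rightarrow> nat \<Rightarrow> (nat \<Rightarrow> real) \<Rightarrow> real" where
  "vcg_h n cs i \<theta> =
     - Max ((\<lambda>d. \<Sum>j\<in>{..<n} - {i}. valuation cs j d (\<theta> j)) ` {0, 1})"

definition pay_only ::
  "nat \<Rightarrow> real \<Rightarrow> (nat \<Rightarrow> (nat \<Rightarrow> real) \<Rightarrow> real) \<Rightarrow> bool" where
  "pay_only n c t \<longleftrightarrow> (\<forall>\<theta>\<in>profiles n c. \<forall>i<n. t i \<theta> \<le> 0)"

definition dominates ::
  "nat \<Rightarrow> real \<Rightarrow> (nat \<Rightarrow> (nat \<Rightarrow> real) \<Rightarrow> real)
     \<Rightarrow> (nat \<Rightarrow> (nat \<Rightarrow> real) \<Rightarrow> real) \<Rightarrow> bool" where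
  "dominates n c t' t \<longleftrightarrow>
     (\<forall>\<theta>\<in>profiles n c. \<forall>i<n. t i \<theta> \<le> t' i \<theta>) \<and>
     (\<exists>\<theta>\<in>profiles n c. \<exists>i<n. t i \<theta> < t' i \<theta>)"

end

theory Submission
  imports Defs
begin

lemma val_sum: "(\<Sum>j\<in>A. valuation cs j d (\<theta> j)) = d * (\<Sum>j\<in>A. \<theta> j - cs j)"
  by (simp add: valuation_def sum_distrib_left)

lemma vcg_eq: "vcg_h n cs i \<theta> = - max 0 (\<Sum>j\<in>{..<n} - {i}. \<theta> j - cs j)"
  unfolding vcg_h_def val_sum by (simp add: max_def)

lemma key:
  fixes n :: nat and c :: real and cs :: "nat \<Rightarrow> real"
  assumes c0: "c > 0" and csp: "\<forall>i<n. cs i > 0" and csum: "(\<Sum>i<n. cs i) = c"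
    and dep: "depends_only_on_others n c h"
    and po: "pay_only n c (groves_tax n c cs h)"
    and th: "\<theta> \<in> profiles n c" and i: "i < n"
  shows "h i \<theta> \<le> vcg_h n cs i \<theta>"
proof -
  define S where "S = (\<Sum>j\<in>{..<n} - {i}. \<theta> j - cs j)"
  have csi: "(\<Sum>i<n. cs i) = cs i + (\<Sum>j\<in>{..<n} - {i}. cs j)"
    using i by (simp add: sum.remove)
  have nonneg: "\<forall>j<n. cs j \<ge> 0" using csp by (auto simp: less_imp_le)
  have "(\<Sum>j\<in>{..<n} - {i}. cs j) \<ge> 0" using nonneg by (intro sum_nonneg) auto
  hence csile: "cs i \<le> c" using csi csum by linarith
  have gen: "h i \<theta> \<le> - (decision n c (\<theta>(i:=x)) * S)" if x: "x \<in> {0..c}" for x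
  proof -
    let ?t = "\<theta>(i:=x)"
    have tp: "?t \<in> profiles n c" using th x by (auto simp: profiles_def)
    have D: "\<forall>i<n. \<forall>\<theta>\<in>profiles n c. \<forall>\<theta>'\<in>profiles n c.
        (\<forall>j<n. j \<noteq> i \<longrightarrow> \<theta> j = \<theta>' j) \<longrightarrow> h i \<theta> = h i \<theta>'"
      using dep unfolding depends_only_on_others_def .
    have "\<forall>j<n. j \<noteq> i \<longrightarrow> ?t j = \<theta> j" by simp
    hence "h i ?t = h i \<theta>" using D i th tp by blast
    moreover have "groves_tax n c cs h i ?t \<le> 0" using po tp i by (auto simp: pay_only_def)
    moreover have "(\<Sum>j\<in>{..<n} - {i}. valuation cs j d (?t j)) = d * S" for d
      unfolding S_def val_sum by (intro arg_cong[where f="\<lambda>s. d * s"] sum.cong) auto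
    ultimately show ?thesis unfolding groves_tax_def by simp
  qed
  have sumt: "(\<Sum>k<n. (\<theta>(i:=x)) k) = x + (\<Sum>j\<in>{..<n} - {i}. \<theta> j)" for x
  proof -
    have "(\<Sum>k<n. (\<theta>(i:=x)) k) = (\<theta>(i:=x)) i + (\<Sum>j\<in>{..<n} - {i}. (\<theta>(i:=x)) j)"
      using i by (simp add: sum.remove)
    also have "(\<Sum>j\<in>{..<n} - {i}. (\<theta>(i:=x)) j) = (\<Sum>j\<in>{..<n} - {i}. \<theta> j)"
      by (intro sum.cong) auto
    finally show ?thesis by simp
  qed
  have Sexp: "S = (\<Sum>j\<in>{..<n} - {i}. \<theta> j) - (\<Sum>j\<in>{..<n} - {i}. cs j)"
    unfolding S_def by (simp add: sum_subtractf)
  show ?thesis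
  proof (cases "S \<ge> 0")
    case True
    have "c + (\<Sum>j\<in>{..<n} - {i}. \<theta> j) \<ge> c"
      using True Sexp csi csum csile by linarith
    hence "decision n c (\<theta>(i:=c)) = 1"
      unfolding decision_def sumt by simp
    moreover have "vcg_h n cs i \<theta> = - S" unfolding vcg_eq S_def[symmetric] using True by simp
    ultimately show ?thesis using gen[of c] c0 by simp
  next
    case False
    have "cs i > 0" using csp i by blast
    hence "\<not> (0 + (\<Sum>j\<in>{..<n} - {i}. \<theta> j) \<ge> c)"
      using False Sexp csi csum by linarith
    hence "decision n c (\<theta>(i:=0)) = 0"
      unfolding decision_def sumt by simp
    moreover have "vcg_h n cs i \<theta> = 0" unfolding vcg_eq S_def[symmetric] using False by simp
    ultimately show ?thesis using gen[of 0] c0 by simp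
  qed
qed

theorem theorem4:
  fixes n :: nat and c :: real and cs :: "nat \<Rightarrow> real"
  assumes "n \<ge> 2" and "c > 0"
    and "\<forall>i<n. cs i > 0" and "(\<Sum>i<n. cs i) = c"
  shows "\<not> (\<exists>h. depends_only_on_others n c h
               \<and> pay_only n c (groves_tax n c cs h)
               \<and> dominates n c (groves_tax n c cs h) (groves_tax n c cs (vcg_h n cs)))"
proof
  assume "\<exists>h. depends_only_on_others n c h
               \<and> pay_only n c (groves_tax n c cs h)
               \<and> dominates n c (groves_tax n c cs h) (groves_tax n c cs (vcg_h n cs))"
  then obtain h where dep: "depends_only_on_others n c h"
    and po: "pay_only n c (groves_tax n c cs h)"
    and dom: "dominates n c (groves_tax n c cs h) (groves_tax n c cs (vcg_h n cs))" by blast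
  from dom obtain \<theta> i where th: "\<theta> \<in> profiles n c" and i: "i < n"
    and lt: "groves_tax n c cs (vcg_h n cs) i \<theta> < groves_tax n c cs h i \<theta>"
    unfolding dominates_def by blast
  have "h i \<theta> \<le> vcg_h n cs i \<theta>" using key[OF assms(2-4) dep po th i] .
  with lt show False unfolding groves_tax_def by simp
qed

end
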